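(* Let $G=(V,E)$ be a finite connected multigraph, $\mathscr H_0$ a connected component of its exchange graph with vertex set $\mathscr V_0=\mathscr V_{0,1}\sqcup\mathscr V_{0,2}$ (where $\mathscr V_{0,i}=\mathscr V_0\cap\mathscr V_i$). For $u,v\in V$ the following properties are equivalent: (1) $u\not\simeq v$; (2) there exists $(F,T)\in\mathscr V_{0,1}$ such that $u$ and $v$ lie in different connected components of $F$; (3) there exists $(T',F')\in\mathscr V_{0,2}$ such that $u$ and $v$ lie in different connected components of $F'$.
   Context: A spanning tree of $G$ is a subgraph with vertex set $V$ that is a tree; a spanning 2-forest is a subgraph with vertex set $V$, without cycles, with exactly two connected components; $\mathcal{ST}(G)$, $\mathcal{SF}_2(G)$ denote the sets of these. For a spanning subgraph $G'$, $G'+e$ (resp. $G'-e$) is the spanning subgraph with edge set $E(G')\cup\{e\}$ (resp. $E(G')\setminus\{e\}$). The exchange graph $\mathscr H$ of $G$ has vertex set $\mathscr V_1\sqcup\mathscr V_2$, $\mathscr V_1=\{(F,T): F\in\mathcal{SF}_2(G),T\in\mathcal{ST}(G),E(F)\cap E(T)=\emptyset\}$, $\mathscr V_2=\{(T,F):T\in\mathcal{ST}(G),F\in\mathcal{SF}_2(G),E(F)\cap E(T)=\emptyset\}$, with $(F,T)\in\mathscr V_1$ adjacent to $(T',F')\in\mathscr V_2$ iff there is $e\in E(T)$ with $F'=T-e$ and $T'=F+e$. For a spanning 2-forest $F$, $\mathcal{P}(F)$ is the partition of $V$ into the vertex sets of its two components; for a partition $\mathcal{P}$ of $V$, $E(\mathcal{P})$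 is the set of edges of $G$ joining different parts; $T\setminus E(\mathcal{P}(F))$ is the spanning subgraph with edge set $E(T)\setminus E(\mathcal{P}(F))$. The relation $\simeq$ on $V$ is defined by: $u\simeq v$ iff for every $(F,T)\in\mathscr V_{0,1}$, $u$ and $v$ lie in the same connected component of $T\setminus E(\mathcal{P}(F))$. (The paper shows this equals the analogous relation defined using all $(T,F)\in\mathscr V_{0,2}$.) *)

theory Defs
  imports Main
begin

text \<open>A finite multigraph is given by a vertex set V, an edge set E (edge identifiers,
so parallel edges are allowed) and an endpoint map ep. A spanning subgraph is
identified with its edge set S (a subset of E); its vertex set is always V.\<close>

definition multigraph :: "'v set \<Rightarrow> 'e set \<Rightarrow> ('e \<Rightarrow> 'v \<times> 'v) \<Rightarrow> bool" where
  "multigraph V E ep \<longleftrightarrow> finite V \<and> finite E \<and>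
     (\<forall>e\<in>E. fst (ep e) \<in> V \<and> snd (ep e) \<in> V)"

definition adjrel :: "('e \<Rightarrow> 'v \<times> 'v) \<Rightarrow> 'e set \<Rightarrow> ('v \<times> 'v) set" where
  "adjrel ep S = {(a, b). \<exists>e\<in>S. ep e = (a, b) \<or> ep e = (b, a)}"

definition conn :: "'v set \<Rightarrow> ('e \<Rightarrow> 'v \<times> 'v) \<Rightarrow> 'e set \<Rightarrow> 'v \<Rightarrow> 'v \<Rightarrow> bool" where
  "conn V ep S u v \<longleftrightarrow> u \<in> V \<and> v \<in> V \<and> (u, v) \<in> (adjrel ep S)\<^sup>*"

definition connected_mg :: "'v set \<Rightarrow> 'e set \<Rightarrow> ('e \<Rightarrow> 'v \<times> 'v) \<Rightarrow> bool" where
  "connected_mg V E ep \<longleftrightarrow> V \<noteq> {} \<and> (\<forall>u\<in>V. \<forall>v\<in>V. conn V ep E u v)"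

definition components :: "'v set \<Rightarrow> ('e \<Rightarrow> 'v \<times> 'v) \<Rightarrow> 'e set \<Rightarrow> 'v set set" where
  "components V ep S = V // {(u, v). conn V ep S u v}"

text \<open>A spanning subgraph is acyclic iff no edge lies on a cycle, i.e. the endpoints of every
edge are disconnected after removing that edge (this excludes loops and parallel edges).\<close>
definition acyclic_sub :: "'v set \<Rightarrow> 'e set \<Rightarrow> ('e \<Rightarrow> 'v \<times> 'v) \<Rightarrow> 'e set \<Rightarrow> bool" where
  "acyclic_sub V E ep S \<longleftrightarrow> S \<subseteq> E \<and>
     (\<forall>e\<in>S. \<not> conn V ep (S - {e}) (fst (ep e)) (snd (ep e)))"

definition spanning_trees :: "'v set \<Rightarrow> 'e set \<Rightarrow> ('e \<Rightarrow> 'v \<times> 'v) \<Rightarrow> 'e set set" where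
  "spanning_trees V E ep = {S. acyclic_sub V E ep S \<and> card (components V ep S) = 1}"

definition spanning_2forests :: "'v set \<Rightarrow> 'e set \<Rightarrow> ('e \<Rightarrow> 'v \<times> 'v) \<Rightarrow> 'e set set" where
  "spanning_2forests V E ep = {S. acyclic_sub V E ep S \<and> card (components V ep S) = 2}"

text \<open>Vertices of the exchange graph: Inl (F,T) is an element of V_1, Inr (T,F) of V_2.\<close>
type_synonym 'e xvert = "('e set \<times> 'e set) + ('e set \<times> 'e set)"

definition xverts :: "'v set \<Rightarrow> 'e set \<Rightarrow> ('e \<Rightarrow> 'v \<times> 'v) \<Rightarrow> 'e xvert set" where
  "xverts V E ep =
     Inl ` {(F, T). F \<in> spanning_2forests V E ep \<and> T \<in> spanning_trees V E ep \<and> F \<inter> T = {}} \<union>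
     Inr ` {(T, F). T \<in> spanning_trees V E ep \<and> F \<in> spanning_2forests V E ep \<and> F \<inter> T = {}}"

definition xedges :: "'v set \<Rightarrow> 'e set \<Rightarrow> ('e \<Rightarrow> 'v \<times> 'v) \<Rightarrow> ('e xvert \<times> 'e xvert) set" where
  "xedges V E ep = {(x, y). x \<in> xverts V E ep \<and> y \<in> xverts V E ep \<and>
     (\<exists>F T T' F'. ((x = Inl (F, T) \<and> y = Inr (T', F')) \<or> (y = Inl (F, T) \<and> x = Inr (T', F'))) \<and>
        (\<exists>e\<in>T. F' = T - {e} \<and> T' = F \<union> {e}))}"

definition xcomponents :: "'v set \<Rightarrow> 'e set \<Rightarrow> ('e \<Rightarrow> 'v \<times> 'v) \<Rightarrow> 'e xvert set set" where
  "xcomponents V E ep = xverts V E ep // ((xedges V E ep)\<^sup>*)"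

definition V01 :: "'e xvert set \<Rightarrow> ('e set \<times> 'e set) set" where
  "V01 H0 = {p. Inl p \<in> H0}"

definition V02 :: "'e xvert set \<Rightarrow> ('e set \<times> 'e set) set" where
  "V02 H0 = {p. Inr p \<in> H0}"

definition cut_edges :: "'v set \<Rightarrow> 'e set \<Rightarrow> ('e \<Rightarrow> 'v \<times> 'v) \<Rightarrow> 'e set \<Rightarrow> 'e set" where
  "cut_edges V E ep F = {e\<in>E. \<not> conn V ep F (fst (ep e)) (snd (ep e))}"

definition simeq :: "'v set \<Rightarrow> 'e set \<Rightarrow> ('e \<Rightarrow> 'v \<times> 'v) \<Rightarrow> 'e xvert set \<Rightarrow> 'v \<Rightarrow> 'v \<Rightarrow> bool" where
  "simeq V E ep H0 u v \<longleftrightarrow>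
     (\<forall>(F, T)\<in>V01 H0. conn V ep (T - cut_edges V E ep F) u v)"

end

theory Submission
  imports Defs
begin


lemma adjrel_mono: "S \<subseteq> S' \<Longrightarrow> adjrel ep S \<subseteq> adjrel ep S'"
  unfolding adjrel_def by auto

lemma rt_mono: "S \<subseteq> S' \<Longrightarrow> (adjrel ep S)\<^sup>* \<subseteq> (adjrel ep S')\<^sup>*"
  by (simp add: rtrancl_mono adjrel_mono)

lemma conn_mono: "conn V ep S u v \<Longrightarrow> S \<subseteq> S' \<Longrightarrow> conn V ep S' u v"
  unfolding conn_def using rt_mono by blast

lemma sym_adj: "sym (adjrel ep S)"
  by (rule symI) (auto simp: adjrel_def)

lemma rt_sym: "(u,v) \<in> (adjrel ep S)\<^sup>* \<Longrightarrow> (v,u) \<in> (adjrel ep S)\<^sup>*"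
  using sym_rtrancl[OF sym_adj, of ep S] by (rule symD)

lemma conn_sym: "conn V ep S u v \<Longrightarrow> conn V ep S v u"
  unfolding conn_def by (simp add: rt_sym)

lemma conn_trans: "conn V ep S u v \<Longrightarrow> conn V ep S v w \<Longrightarrow> conn V ep S u w"
  unfolding conn_def by (auto intro: rtrancl_trans[of u v _ w])

lemma conn_refl: "u \<in> V \<Longrightarrow> conn V ep S u u"
  unfolding conn_def by auto

lemma equiv_conn: "equiv V {(u,v). conn V ep S u v}"
proof (rule equivI)
  show "{(u,v). conn V ep S u v} \<subseteq> V \<times> V" by (auto simp: conn_def)
  show "refl_on V {(u,v). conn V ep S u v}"
    by (rule refl_onI) (auto simp: conn_def)
  show "sym {(u,v). conn V ep S u v}"
    by (rule symI) (simp add: conn_sym)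
  show "trans {(u,v). conn V ep S u v}"
    by (rule transI) (simp, rule conn_trans)
qed

lemma adj_edge: "e \<in> S \<Longrightarrow> (fst (ep e), snd (ep e)) \<in> adjrel ep S"
  unfolding adjrel_def by (cases "ep e") auto

lemma adj_insert: "adjrel ep (insert e S) = adjrel ep S \<union> {(fst (ep e), snd (ep e)), (snd (ep e), fst (ep e))}"
  unfolding adjrel_def by (cases "ep e") auto

lemma bridge:
  assumes "sym R" "(u,v) \<in> (R \<union> {(a,b),(b,a)})\<^sup>*"
  shows "(u,v)\<in>R\<^sup>* \<or> ((u,a)\<in>R\<^sup>* \<and> (b,v)\<in>R\<^sup>*) \<or> ((u,b)\<in>R\<^sup>* \<and> (a,v)\<in>R\<^sup>*)"
  using assms(2)
proof (induction rule: rtrancl_induct)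
  case base
  then show ?case by simp
next
  case (step y z)
  have sy: "\<And>x y. (x,y) \<in> R\<^sup>* \<Longrightarrow> (y,x) \<in> R\<^sup>*"
    using sym_rtrancl[OF assms(1)] by (meson symD)
  from step.hyps(2) consider "(y,z) \<in> R" | "y = a" "z = b" | "y = b" "z = a" by auto
  then show ?case
  proof cases
    case 1
    then show ?thesis using step.IH rtrancl.rtrancl_into_rtrancl[OF _ 1] by blast
  next
    case 2
    then show ?thesis using step.IH by auto
  next
    case 3
    then show ?thesis using step.IH by auto
  qed
qed

lemma tree_conn:
  assumes "card (components V ep T) = 1" "u\<in>V" "v\<in>V"
  shows "conn V ep T u v"
proof -
  obtain X where X: "components V ep T = {X}" using assms(1) by (rule card_1_singletonE)
  let ?R = "{(u,v). conn V ep T u v}"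
  have A: "?R``{u} \<in> V//?R" "?R``{v} \<in> V//?R" by (rule quotientI, fact)+
  hence "?R``{u} = X" "?R``{v} = X" using X unfolding components_def by simp_all
  hence "?R``{u} = ?R``{v}" by simp
  hence "(u,v) \<in> ?R" using eq_equiv_class_iff[OF equiv_conn assms(2,3)] by blast
  thus ?thesis by simp
qed

lemma forest2_cover:
  assumes "card (components V ep F) = 2" "a\<in>V" "b\<in>V" "\<not> conn V ep F a b" "x\<in>V"
  shows "conn V ep F a x \<or> conn V ep F b x"
proof -
  from card_2_iff[THEN iffD1, OF assms(1)] obtain A B where AB: "components V ep F = {A,B}"
    by (elim exE conjE)
  let ?R = "{(u,v). conn V ep F u v}"
  have "?R``{a} \<in> V//?R" "?R``{b} \<in> V//?R" "?R``{x} \<in> V//?R" by (rule quotientI, fact)+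
  hence m: "?R``{a} \<in> {A,B}" "?R``{b} \<in> {A,B}" "?R``{x} \<in> {A,B}" using AB unfolding components_def by simp_all
  have ne: "?R``{a} \<noteq> ?R``{b}" using eq_equiv_class_iff[OF equiv_conn[of V ep F] assms(2,3)] assms(4) by simp
  have "?R``{x} = ?R``{a} \<or> ?R``{x} = ?R``{b}"
  proof -
    from m(1) have "?R``{a} = A \<or> ?R``{a} = B" by simp
    moreover from m(2) have "?R``{b} = A \<or> ?R``{b} = B" by simp
    moreover from m(3) have "?R``{x} = A \<or> ?R``{x} = B" by simp
    ultimately show ?thesis using ne by argo
  qed
  hence "(x,a) \<in> ?R \<or> (x,b) \<in> ?R"
    using eq_equiv_class_iff[OF equiv_conn[of V ep F] assms(5) assms(2)] eq_equiv_class_iff[OF equiv_conn[of V ep F] assms(5) assms(3)]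
    by blast
  thus ?thesis using conn_sym[of V ep F x a] conn_sym[of V ep F x b] by auto
qed


lemma ep_in_V: "multigraph V E ep \<Longrightarrow> e \<in> E \<Longrightarrow> fst (ep e) \<in> V \<and> snd (ep e) \<in> V"
  unfolding multigraph_def by auto

lemma conn_edge: "multigraph V E ep \<Longrightarrow> S \<subseteq> E \<Longrightarrow> e \<in> S \<Longrightarrow> conn V ep S (fst (ep e)) (snd (ep e))"
proof -
  assume a: "multigraph V E ep" "S \<subseteq> E" "e \<in> S"
  have "fst (ep e) \<in> V \<and> snd (ep e) \<in> V" using ep_in_V[OF a(1)] a(2,3) by auto
  moreover have "(fst (ep e), snd (ep e)) \<in> adjrel ep S" using a(3) by (rule adj_edge)
  ultimately show ?thesis unfolding conn_def by auto
qed

lemma cut_notin: "multigraph V E ep \<Longrightarrow> F \<subseteq> E \<Longrightarrow> e \<in> cut_edges V E ep F \<Longrightarrow> e \<notin> F"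
proof
  assume a: "multigraph V E ep" "F \<subseteq> E" "e \<in> cut_edges V E ep F" "e \<in> F"
  have "conn V ep F (fst (ep e)) (snd (ep e))" using conn_edge[OF a(1,2,4)] .
  thus False using a(3) unfolding cut_edges_def by simp
qed

lemma tree_minus:
  assumes mg: "multigraph V E ep" and T: "T \<in> spanning_trees V E ep" and e: "e \<in> T"
  shows "T - {e} \<in> spanning_2forests V E ep"
proof -
  define a where "a = fst (ep e)"
  define b where "b = snd (ep e)"
  have acT: "acyclic_sub V E ep T" and cT: "card (components V ep T) = 1"
    using T unfolding spanning_trees_def by auto
  have TE: "T \<subseteq> E" using acT unfolding acyclic_sub_def by auto
  have ab: "a \<in> V" "b \<in> V" using ep_in_V[OF mg] TE e unfolding a_def b_def by auto
  have ac: "acyclic_sub V E ep (T - {e})"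
    using acT unfolding acyclic_sub_def by (auto dest: conn_mono[where S' = "T - {_}"])
  have nab: "\<not> conn V ep (T - {e}) a b" using acT e unfolding acyclic_sub_def a_def b_def by auto
  let ?R = "{(u,v). conn V ep (T - {e}) u v}"
  have cover: "conn V ep (T - {e}) a x \<or> conn V ep (T - {e}) b x" if x: "x \<in> V" for x
  proof -
    have "(a,x) \<in> (adjrel ep (insert e (T - {e})))\<^sup>*"
      using tree_conn[OF cT ab(1) x] e unfolding conn_def by (simp add: insert_absorb)
    hence "(a,x) \<in> (adjrel ep (T - {e}) \<union> {(a,b),(b,a)})\<^sup>*"
      unfolding adj_insert a_def b_def .
    from bridge[OF sym_adj this] show ?thesis unfolding conn_def using ab x by auto
  qed
  have "components V ep (T - {e}) = {?R``{a}, ?R``{b}}"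
  proof
    show "components V ep (T - {e}) \<subseteq> {?R``{a}, ?R``{b}}"
    proof
      fix X assume "X \<in> components V ep (T - {e})"
      then obtain x where x: "x \<in> V" "X = ?R``{x}" unfolding components_def by (auto elim: quotientE)
      from cover[OF x(1)] have "(a,x) \<in> ?R \<or> (b,x) \<in> ?R" by simp
      hence "?R``{a} = ?R``{x} \<or> ?R``{b} = ?R``{x}"
        using equiv_class_eq[OF equiv_conn[of V ep "T - {e}"]] by blast
      thus "X \<in> {?R``{a}, ?R``{b}}" using x(2) by auto
    qed
    have "?R``{a} \<in> V//?R" "?R``{b} \<in> V//?R" by (rule quotientI, fact)+
    thus "{?R``{a}, ?R``{b}} \<subseteq> components V ep (T - {e})"
      unfolding components_def by simp
  qed
  moreover have "?R``{a} \<noteq> ?R``{b}" using eq_equiv_class_iff[OF equiv_conn[of V ep "T - {e}"] ab] nab by auto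
  ultimately have "card (components V ep (T - {e})) = 2" by simp
  thus ?thesis using ac unfolding spanning_2forests_def by auto
qed

lemma forest_plus:
  assumes mg: "multigraph V E ep" and F: "F \<in> spanning_2forests V E ep"
    and e: "e \<in> cut_edges V E ep F"
  shows "insert e F \<in> spanning_trees V E ep"
proof -
  define a where "a = fst (ep e)"
  define b where "b = snd (ep e)"
  have acF: "acyclic_sub V E ep F" and cF: "card (components V ep F) = 2"
    using F unfolding spanning_2forests_def by auto
  have FE: "F \<subseteq> E" using acF unfolding acyclic_sub_def by auto
  have eE: "e \<in> E" and nab: "\<not> conn V ep F a b" using e unfolding cut_edges_def a_def b_def by auto
  have ab: "a \<in> V" "b \<in> V" using ep_in_V[OF mg eE] unfolding a_def b_def by auto
  have eF: "e \<notin> F" using cut_notin[OF mg FE e] .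
  have ab2: "conn V ep (insert e F) a b" using conn_edge[OF mg, of "insert e F" e] FE eE
    unfolding a_def b_def by auto
  have all: "conn V ep (insert e F) x y" if "x \<in> V" "y \<in> V" for x y
  proof -
    have sb: "F \<subseteq> insert e F" by auto
    have h1: "\<And>z. z \<in> V \<Longrightarrow> conn V ep (insert e F) a z"
    proof -
      fix z assume z: "z \<in> V"
      from forest2_cover[OF cF ab nab z]
      show "conn V ep (insert e F) a z"
      proof
        assume "conn V ep F a z" thus ?thesis by (rule conn_mono[OF _ sb])
      next
        assume "conn V ep F b z" hence "conn V ep (insert e F) b z" by (rule conn_mono[OF _ sb])
        thus ?thesis using conn_trans[OF ab2] by simp
      qed
    qed
    show ?thesis using conn_trans[OF conn_sym[OF h1[OF that(1)]] h1[OF that(2)]] .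
  qed
  let ?R = "{(u,v). conn V ep (insert e F) u v}"
  have "components V ep (insert e F) = {V}"
  proof -
    have "\<forall>x\<in>V. ?R``{x} = V" using all unfolding conn_def by auto
    thus ?thesis unfolding components_def quotient_def using ab by auto
  qed
  hence c1: "card (components V ep (insert e F)) = 1" by simp
  have ac: "acyclic_sub V E ep (insert e F)"
    unfolding acyclic_sub_def
  proof (intro conjI ballI)
    show "insert e F \<subseteq> E" using FE eE by auto
    fix f assume f: "f \<in> insert e F"
    show "\<not> conn V ep (insert e F - {f}) (fst (ep f)) (snd (ep f))"
    proof (cases "f = e")
      case True
      then show ?thesis using eF nab unfolding a_def b_def by simp
    next
      case False
      define c where "c = fst (ep f)"
      define d where "d = snd (ep f)"
      have fF: "f \<in> F" using f False by auto
      have ncd: "\<not> conn V ep (F - {f}) c d" using acF fF unfolding acyclic_sub_def c_def d_def by auto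
      have eq: "insert e F - {f} = insert e (F - {f})" using False by auto
      show ?thesis
      proof
        assume "conn V ep (insert e F - {f}) (fst (ep f)) (snd (ep f))"
        hence cd: "c \<in> V" "d \<in> V" "(c,d) \<in> (adjrel ep (F - {f}) \<union> {(a,b),(b,a)})\<^sup>*"
          unfolding eq conn_def adj_insert a_def b_def c_def d_def by auto
        have cdF: "(c,d) \<in> (adjrel ep F)\<^sup>*" using adj_edge[OF fF] unfolding c_def d_def by auto
        have sub: "(adjrel ep (F - {f}))\<^sup>* \<subseteq> (adjrel ep F)\<^sup>*" by (rule rt_mono) auto
        from bridge[OF sym_adj cd(3)] show False
        proof (elim disjE conjE)
          assume "(c,d) \<in> (adjrel ep (F - {f}))\<^sup>*" thus False using ncd cd unfolding conn_def by auto
        next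
          assume h: "(c,a) \<in> (adjrel ep (F - {f}))\<^sup>*" "(b,d) \<in> (adjrel ep (F - {f}))\<^sup>*"
          have "(c,a) \<in> (adjrel ep F)\<^sup>*" using h(1) sub by auto
          hence "(a,c) \<in> (adjrel ep F)\<^sup>*" by (rule rt_sym)
          moreover have "(b,d) \<in> (adjrel ep F)\<^sup>*" using h(2) sub by auto
          hence "(d,b) \<in> (adjrel ep F)\<^sup>*" by (rule rt_sym)
          ultimately have "(a,b) \<in> (adjrel ep F)\<^sup>*" using cdF rtrancl_trans[of a c _ d] rtrancl_trans[of a d _ b] by blast
          thus False using nab ab unfolding conn_def by auto
        next
          assume h: "(c,b) \<in> (adjrel ep (F - {f}))\<^sup>*" "(a,d) \<in> (adjrel ep (F - {f}))\<^sup>*"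
          have "(a,d) \<in> (adjrel ep F)\<^sup>*" using h(2) sub by auto
          moreover have "(d,c) \<in> (adjrel ep F)\<^sup>*" using cdF by (rule rt_sym)
          moreover have "(c,b) \<in> (adjrel ep F)\<^sup>*" using h(1) sub by auto
          ultimately have "(a,b) \<in> (adjrel ep F)\<^sup>*" using rtrancl_trans[of a d _ c] rtrancl_trans[of a c _ b] by blast
          thus False using nab ab unfolding conn_def by auto
        qed
      qed
    qed
  qed
  show ?thesis using ac c1 unfolding spanning_trees_def by auto
qed


lemma one_step:
  assumes acS: "acyclic_sub V E ep S" and mg: "multigraph V E ep" and sub: "S' \<subseteq> S" and c: "c \<in> S'"
    and uv: "u \<in> V" "v \<in> V" and cn: "conn V ep S' u v" and nc: "\<not> conn V ep (S' - {c}) u v"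
  shows "\<not> conn V ep (S - {c}) u v"
proof
  assume H: "conn V ep (S - {c}) u v"
  define a where "a = fst (ep c)"
  define b where "b = snd (ep c)"
  have SE: "S \<subseteq> E" using acS unfolding acyclic_sub_def by auto
  have ab: "a \<in> V" "b \<in> V" using ep_in_V[OF mg] SE sub c unfolding a_def b_def by auto
  have nab: "\<not> conn V ep (S - {c}) a b" using acS sub c unfolding acyclic_sub_def a_def b_def by auto
  let ?R = "adjrel ep (S' - {c})"
  let ?Q = "adjrel ep (S - {c})"
  have "(u,v) \<in> (adjrel ep (insert c (S' - {c})))\<^sup>*" using cn c unfolding conn_def by (simp add: insert_absorb)
  hence p: "(u,v) \<in> (?R \<union> {(a,b),(b,a)})\<^sup>*" unfolding adj_insert a_def b_def .
  have RQ: "?R\<^sup>* \<subseteq> ?Q\<^sup>*" by (rule rt_mono) (use sub in auto)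
  have uvQ: "(u,v) \<in> ?Q\<^sup>*" using H unfolding conn_def by auto
  from bridge[OF sym_adj p] show False
  proof (elim disjE conjE)
    assume "(u,v) \<in> ?R\<^sup>*" thus False using nc uv unfolding conn_def by auto
  next
    assume h: "(u,a) \<in> ?R\<^sup>*" "(b,v) \<in> ?R\<^sup>*"
    have "(u,a) \<in> ?Q\<^sup>*" using h(1) RQ by auto
    hence "(a,u) \<in> ?Q\<^sup>*" by (rule rt_sym)
    moreover have "(b,v) \<in> ?Q\<^sup>*" using h(2) RQ by auto
    hence "(v,b) \<in> ?Q\<^sup>*" by (rule rt_sym)
    ultimately have "(a,b) \<in> ?Q\<^sup>*" using uvQ rtrancl_trans[of a u _ v] rtrancl_trans[of a v _ b] by blast
    thus False using nab ab unfolding conn_def by auto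
  next
    assume h: "(u,b) \<in> ?R\<^sup>*" "(a,v) \<in> ?R\<^sup>*"
    have "(u,b) \<in> ?Q\<^sup>*" using h(1) RQ by auto
    hence "(b,u) \<in> ?Q\<^sup>*" by (rule rt_sym)
    moreover have "(a,v) \<in> ?Q\<^sup>*" using h(2) RQ by auto
    hence "(v,a) \<in> ?Q\<^sup>*" by (rule rt_sym)
    ultimately have "(b,a) \<in> ?Q\<^sup>*" using uvQ rtrancl_trans[of b u _ v] rtrancl_trans[of b v _ a] by blast
    hence "(a,b) \<in> ?Q\<^sup>*" by (rule rt_sym)
    thus False using nab ab unfolding conn_def by auto
  qed
qed

lemma cut_step:
  assumes acS: "acyclic_sub V E ep S" and mg: "multigraph V E ep" and fin: "finite C"
    and uv: "u \<in> V" "v \<in> V" and cn: "conn V ep S u v" and nc: "\<not> conn V ep (S - C) u v"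
  shows "\<exists>c\<in>C \<inter> S. \<not> conn V ep (S - {c}) u v"
  using fin nc
proof (induction C rule: finite_induct)
  case empty
  then show ?case using cn by simp
next
  case (insert c C')
  show ?case
  proof (cases "conn V ep (S - C') u v")
    case True
    have eq: "S - insert c C' = (S - C') - {c}" by auto
    have cS: "c \<in> S - C'"
    proof (rule ccontr)
      assume "c \<notin> S - C'"
      hence "S - insert c C' = S - C'" by auto
      thus False using True insert.prems by simp
    qed
    have "\<not> conn V ep (S - {c}) u v"
      using one_step[OF acS mg _ cS uv True] insert.prems eq by auto
    then show ?thesis using cS by auto
  next
    case False
    then show ?thesis using insert.IH by auto
  qed
qed

lemma cut_lift:
  assumes SE: "S \<subseteq> E" and nc: "\<not> conn V ep F u v" and uv: "u \<in> V" "v \<in> V"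
  shows "\<not> conn V ep (S - cut_edges V E ep F) u v"
proof -
  have "adjrel ep (S - cut_edges V E ep F) \<subseteq> (adjrel ep F)\<^sup>*"
  proof
    fix p assume "p \<in> adjrel ep (S - cut_edges V E ep F)"
    then obtain e where e: "e \<in> S" "e \<notin> cut_edges V E ep F" "ep e = p \<or> ep e = prod.swap p"
      unfolding adjrel_def by (cases p) auto
    have "(fst (ep e), snd (ep e)) \<in> (adjrel ep F)\<^sup>*" using e SE unfolding cut_edges_def conn_def by auto
    thus "p \<in> (adjrel ep F)\<^sup>*" using e(3) rt_sym by (cases p) auto
  qed
  hence "(adjrel ep (S - cut_edges V E ep F))\<^sup>* \<subseteq> (adjrel ep F)\<^sup>*" by (rule rtrancl_subset_rtrancl)
  thus ?thesis using nc uv unfolding conn_def by auto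
qed


theorem proposition2p10:
  fixes V :: "'v set" and E :: "'e set" and ep :: "'e \<Rightarrow> 'v \<times> 'v"
    and H0 :: "'e xvert set" and u v :: 'v
  assumes "multigraph V E ep"
    and "connected_mg V E ep"
    and "H0 \<in> xcomponents V E ep"
    and "u \<in> V" and "v \<in> V"
  shows "(\<not> simeq V E ep H0 u v \<longleftrightarrow> (\<exists>(F, T)\<in>V01 H0. \<not> conn V ep F u v))
       \<and> (\<not> simeq V E ep H0 u v \<longleftrightarrow> (\<exists>(T', F')\<in>V02 H0. \<not> conn V ep F' u v))"
proof -
  note mg = assms(1) and uv = assms(4,5)
  obtain x0 where x0: "x0 \<in> xverts V E ep" "H0 = (xedges V E ep)\<^sup>* `` {x0}"
    using assms(3) unfolding xcomponents_def by (auto elim: quotientE)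
  have clos: "y \<in> H0" if "x \<in> H0" "(x,y) \<in> xedges V E ep" for x y
    using that x0(2) by (auto intro: rtrancl_into_rtrancl)
  have sub: "y \<in> xverts V E ep" if "(x0,y) \<in> (xedges V E ep)\<^sup>*" for y
    using that by (induction rule: rtrancl_induct) (auto simp: xedges_def x0(1))
  have H0sub: "H0 \<subseteq> xverts V E ep" using sub x0(2) by auto
  have V1: "F \<in> spanning_2forests V E ep \<and> T \<in> spanning_trees V E ep \<and> F \<inter> T = {}"
    if "(F,T) \<in> V01 H0" for F T
    using that H0sub unfolding V01_def xverts_def by auto
  have V2: "T \<in> spanning_trees V E ep \<and> F \<in> spanning_2forests V E ep \<and> F \<inter> T = {}"
    if "(T,F) \<in> V02 H0" for F T
    using that H0sub unfolding V02_def xverts_def by auto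
  have treeE: "T \<subseteq> E" if "T \<in> spanning_trees V E ep" for T
    using that unfolding spanning_trees_def acyclic_sub_def by auto
  have forE: "F \<subseteq> E" if "F \<in> spanning_2forests V E ep" for F
    using that unfolding spanning_2forests_def acyclic_sub_def by auto
  have finE: "finite E" using mg unfolding multigraph_def by auto
  have finC: "finite (cut_edges V E ep F)" for F
    using finE unfolding cut_edges_def by auto

  have stepY: "\<exists>(T',F')\<in>V02 H0. \<not> conn V ep F' u v"
    if FT: "(F,T) \<in> V01 H0" and nc: "\<not> conn V ep (T - cut_edges V E ep F) u v" for F T
  proof -
    have F: "F \<in> spanning_2forests V E ep" and T: "T \<in> spanning_trees V E ep" and dj: "F \<inter> T = {}"
      using V1[OF FT] by auto
    have acT: "acyclic_sub V E ep T" and cT: "card (components V ep T) = 1"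
      using T unfolding spanning_trees_def by auto
    obtain e where e: "e \<in> cut_edges V E ep F" "e \<in> T" "\<not> conn V ep (T - {e}) u v"
      using cut_step[OF acT mg finC uv tree_conn[OF cT uv] nc] by auto
    have T': "insert e F \<in> spanning_trees V E ep" using forest_plus[OF mg F e(1)] .
    have F': "T - {e} \<in> spanning_2forests V E ep" using tree_minus[OF mg T e(2)] .
    have mem: "Inr (insert e F, T - {e}) \<in> xverts V E ep"
      using T' F' dj unfolding xverts_def by auto
    have memx: "Inl (F,T) \<in> xverts V E ep" using FT H0sub unfolding V01_def by auto
    have ex: "\<exists>F0 T0 T1 F1. ((Inl (F,T) = Inl (F0, T0) \<and> Inr (insert e F, T - {e}) = Inr (T1, F1)) \<or>
        (Inr (insert e F, T - {e}) = Inl (F0, T0) \<and> Inl (F,T) = Inr (T1, F1))) \<and>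
        (\<exists>e\<in>T0. F1 = T0 - {e} \<and> T1 = F0 \<union> {e})"
      apply (rule exI[of _ F], rule exI[of _ T], rule exI[of _ "insert e F"], rule exI[of _ "T - {e}"])
      using e(2) by auto
    have "(Inl (F,T), Inr (insert e F, T - {e})) \<in> xedges V E ep"
      unfolding xedges_def using mem memx ex by (simp only: mem_Collect_eq case_prod_conv)
    hence "Inr (insert e F, T - {e}) \<in> H0" using clos FT unfolding V01_def by auto
    thus ?thesis using e(3) unfolding V02_def by auto
  qed

  have stepX: "\<exists>(F,T)\<in>V01 H0. \<not> conn V ep F u v"
    if TF: "(T',F') \<in> V02 H0" and nc0: "\<not> conn V ep F' u v" for F' T'
  proof -
    have F': "F' \<in> spanning_2forests V E ep" and T': "T' \<in> spanning_trees V E ep" and dj: "F' \<inter> T' = {}"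
      using V2[OF TF] by auto
    have acT: "acyclic_sub V E ep T'" and cT: "card (components V ep T') = 1"
      using T' unfolding spanning_trees_def by auto
    have nc: "\<not> conn V ep (T' - cut_edges V E ep F') u v"
      using cut_lift[OF treeE[OF T'] nc0 uv] .
    obtain e where e: "e \<in> cut_edges V E ep F'" "e \<in> T'" "\<not> conn V ep (T' - {e}) u v"
      using cut_step[OF acT mg finC uv tree_conn[OF cT uv] nc] by auto
    have eF: "e \<notin> F'" using cut_notin[OF mg forE[OF F'] e(1)] .
    have Tn: "insert e F' \<in> spanning_trees V E ep" using forest_plus[OF mg F' e(1)] .
    have Fn: "T' - {e} \<in> spanning_2forests V E ep" using tree_minus[OF mg T' e(2)] .
    have mem: "Inl (T' - {e}, insert e F') \<in> xverts V E ep"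
      using Tn Fn dj unfolding xverts_def by auto
    have memx: "Inr (T',F') \<in> xverts V E ep" using TF H0sub unfolding V02_def by auto
    have eq1: "F' = insert e F' - {e}" using eF by auto
    have eq2: "T' = (T' - {e}) \<union> {e}" using e(2) by auto
    have ex: "\<exists>F0 T0 T1 F1. ((Inr (T',F') = Inl (F0, T0) \<and> Inl (T' - {e}, insert e F') = Inr (T1, F1)) \<or>
        (Inl (T' - {e}, insert e F') = Inl (F0, T0) \<and> Inr (T',F') = Inr (T1, F1))) \<and>
        (\<exists>e\<in>T0. F1 = T0 - {e} \<and> T1 = F0 \<union> {e})"
      apply (rule exI[of _ "T' - {e}"], rule exI[of _ "insert e F'"], rule exI[of _ T'], rule exI[of _ F'])
      using eq1 eq2 by auto
    have "(Inr (T',F'), Inl (T' - {e}, insert e F')) \<in> xedges V E ep"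
      unfolding xedges_def using mem memx ex by (simp only: mem_Collect_eq case_prod_conv)
    hence "Inl (T' - {e}, insert e F') \<in> H0" using clos TF unfolding V02_def by auto
    thus ?thesis using e(3) unfolding V01_def by auto
  qed

  have Z: "\<not> simeq V E ep H0 u v" if hz: "\<exists>(F, T)\<in>V01 H0. \<not> conn V ep F u v"
  proof -
    obtain F T where FT: "(F,T) \<in> V01 H0" "\<not> conn V ep F u v" using hz by auto
    have "\<not> conn V ep (T - cut_edges V E ep F) u v"
      using cut_lift[OF treeE FT(2) uv] V1[OF FT(1)] by auto
    thus ?thesis using FT(1) unfolding simeq_def by auto
  qed
  have A: "\<exists>(T', F')\<in>V02 H0. \<not> conn V ep F' u v" if ha: "\<not> simeq V E ep H0 u v"
  proof -
    obtain F T where "(F,T) \<in> V01 H0" "\<not> conn V ep (T - cut_edges V E ep F) u v"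
      using ha unfolding simeq_def by auto
    thus ?thesis using stepY by blast
  qed
  have B: "\<exists>(F, T)\<in>V01 H0. \<not> conn V ep F u v" if "\<exists>(T', F')\<in>V02 H0. \<not> conn V ep F' u v"
    using that stepX by blast
  show ?thesis using A B Z by blast
qed

end
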